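(* Let $\varepsilon\in(0,\varepsilon_0]$. The set $\mathbb D_\varepsilon$ is bounded in $\mathbf H$, with $\sup_{z\in\mathbb D_\varepsilon}\|z\|_{\mathbf H}^2\le\frac{4c_*}{\varepsilon}$. Moreover, for every bounded set $\mathcal B\subset\mathbf H$ one has $\mathcal B\subset\mathbb D_\varepsilon$ for all $\varepsilon\in(0,\varepsilon_0]$ sufficiently small (depending on $\sup_{z\in\mathcal B}\|z\|_{\mathbf H}$).
   Context: Let $\mathfrak I=(a,b)\subset\mathbb R$ be a bounded interval, $\mathcal H=L^2(\mathfrak I)$ with inner product $\langle\cdot,\cdot\rangle$ and norm $\|\cdot\|$. Let $A=-\partial_{xx}$ with domain $H^2(\mathfrak I)\cap H^1_0(\mathfrak I)$, $\lambda_1>0$ its first eigenvalue, $\mathcal H^r=D(A^{r/2})$, $\|u\|_r=\|A^{r/2}u\|$, $B=I+A$, and on $\mathcal H^r$ the inner product $(u,v)_r=\langle A^{(r-1)/2}B^{1/2}u,A^{(r-1)/2}B^{1/2}v\rangle$ with norm $|||u|||_r^2=\|u\|_{r-1}^2+\|u\|_r^2$. Set $\omega=\sqrt{(1+\lambda_1)/\lambda_1}$. Let $\mu:(0,\infty)\to[0,\infty)$, $\mu\not\equiv0$, nonincreasing, absolutely continuous, with $\kappa:=\int_0^\infty\mu(s)\,ds\in(0,\infty)$, $\int_0^\infty s\mu(s)\,ds=1$, $\lim_{s\to0^+}\mu(s)<\infty$, and $\mu'+\delta\mu\le0$ a.e. for some $\delta>0$. $\mathcal M=L^2_\mu(\mathbb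 R^+;\mathcal H^1)$ with norm $\|\eta\|_{\mathcal M}^2=\int_0^\infty\mu(s)\|\eta(s)\|_1^2ds$; $\mathbf H=\mathcal H^1\times\mathcal M$ with $\|(u,\eta)\|_{\mathbf H}^2=|||u|||_1^2+\|\eta\|_{\mathcal M}^2$. $T\eta=-\partial_s\eta$ with domain $\{\eta\in\mathcal M:\partial_s\eta\in\mathcal M,\ \lim_{s\to0}\|\eta(s)\|_1=0\}$. For $f\in L^2(\mathfrak I)$, $S(t)$ is the strongly continuous semigroup on $\mathbf H$ generated by $Bu_t+u_x+\int_0^\infty\mu(s)A\eta(s)\,ds+uu_x=f$, $\eta_t=T\eta+u$ (Dirichlet conditions on $u$), $S(t)z=(u(t),\eta^t)$. Let $F(x)=\int_a^xf(y)\,dy$ and for $\varepsilon>0$, $z=(u,\eta)\in\mathbf H$, $$\Lambda_\varepsilon(z)=\|z\|_{\mathbf H}^2+\frac2\kappa\int_0^\infty\mu(s)\langle F,\eta_x(s)\rangle\,ds+\frac2\kappa\|F\|^2-\frac{\varepsilon}{\sqrt\kappa}\int_0^\infty\mu(s)(u,\eta(s))_1\,ds.$$ Let $c_1,c_2,c_3>0$ and $\varepsilon_0\in(0,\frac1{2\omega})$ be constants depending only on $\mathfrak I,\mu$ such that for every $z\in\mathbf H$ and $\varepsilon\in(0,\varepsilon_0]$, $\mathcal L_\varepsilon(t)=\Lambda_\varepsilon(S(t)z)$ satisfies $\mathcal L_\varepsilon'+\varepsilon c_1\mathcal L_\varepsilon\le c_2\|F\|^2+c_3\varepsilon^2\mathcal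 L_\varepsilon^2$ for all $t\ge0$. Standing assumption: $\|F\|<\frac{c_1}{2\sqrt{c_2c_3}}$. Set $c_*=\sqrt{c_2/c_3}\,\big(\frac{c_1}{\sqrt{c_2c_3}}-\|F\|\big)>0$ and, for $\varepsilon\in(0,\varepsilon_0]$, $\mathbb D_\varepsilon=\{z\in\mathbf H:\Lambda_\varepsilon(z)\le c_*/\varepsilon\}$. *)

theory Defs
  imports "HOL-Analysis.Analysis"
begin

text \<open>Concrete setting on the interval (a,b). Functions are real-valued on the real line;
only their values on [a,b] matter. Derivatives are the pointwise (a.e.) derivatives.\<close>

definition L2ip :: "real \<Rightarrow> real \<Rightarrow> (real \<Rightarrow> real) \<Rightarrow> (real \<Rightarrow> real) \<Rightarrow> real" where
  "L2ip a b u v = (LINT x:{a..b}|lborel. u x * v x)"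

definition L2nrm :: "real \<Rightarrow> real \<Rightarrow> (real \<Rightarrow> real) \<Rightarrow> real" where
  "L2nrm a b u = sqrt (L2ip a b u u)"

definition L2fun :: "real \<Rightarrow> real \<Rightarrow> (real \<Rightarrow> real) \<Rightarrow> bool" where
  "L2fun a b u \<longleftrightarrow> set_borel_measurable lborel {a..b} u
      \<and> set_integrable lborel {a..b} (\<lambda>x. (u x)\<^sup>2)"

text \<open>H^1_0(a,b) = D(A^{1/2}): absolutely continuous functions with L^2 derivative
  vanishing at both endpoints.\<close>
definition H10 :: "real \<Rightarrow> real \<Rightarrow> (real \<Rightarrow> real) set" where
  "H10 a b = {u. L2fun a b (deriv u) \<and> u a = 0 \<and> u b = 0
      \<and> (\<forall>x\<in>{a..b}. u x = (LINT y:{a..x}|lborel. deriv u y))}"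

definition nrm1 :: "real \<Rightarrow> real \<Rightarrow> (real \<Rightarrow> real) \<Rightarrow> real" where
  "nrm1 a b u = L2nrm a b (deriv u)"

definition ip1 :: "real \<Rightarrow> real \<Rightarrow> (real \<Rightarrow> real) \<Rightarrow> (real \<Rightarrow> real) \<Rightarrow> real" where
  "ip1 a b u v = L2ip a b u v + L2ip a b (deriv u) (deriv v)"

definition tnrm1sq :: "real \<Rightarrow> real \<Rightarrow> (real \<Rightarrow> real) \<Rightarrow> real" where
  "tnrm1sq a b u = (L2nrm a b u)\<^sup>2 + (nrm1 a b u)\<^sup>2"

text \<open>Memory space M = L^2_mu(R^+; H^1); eta s x is the value of eta(s) at x.\<close>
definition Mspace :: "real \<Rightarrow> real \<Rightarrow> (real \<Rightarrow> real) \<Rightarrow> (real \<Rightarrow> real \<Rightarrow> real) set" where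
  "Mspace a b \<mu> = {\<eta>. (\<forall>s>0. \<eta> s \<in> H10 a b)
      \<and> set_borel_measurable (lborel \<Otimes>\<^sub>M lborel) ({0<..} \<times> {a..b}) (\<lambda>(s,x). \<eta> s x)
      \<and> set_borel_measurable (lborel \<Otimes>\<^sub>M lborel) ({0<..} \<times> {a..b}) (\<lambda>(s,x). deriv (\<eta> s) x)
      \<and> set_integrable lborel {0<..} (\<lambda>s. \<mu> s * (nrm1 a b (\<eta> s))\<^sup>2)}"

definition Mnsq :: "real \<Rightarrow> real \<Rightarrow> (real \<Rightarrow> real) \<Rightarrow> (real \<Rightarrow> real \<Rightarrow> real) \<Rightarrow> real" where
  "Mnsq a b \<mu> \<eta> = (LINT s:{0<..}|lborel. \<mu> s * (nrm1 a b (\<eta> s))\<^sup>2)"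

definition Hspace :: "real \<Rightarrow> real \<Rightarrow> (real \<Rightarrow> real)
    \<Rightarrow> ((real \<Rightarrow> real) \<times> (real \<Rightarrow> real \<Rightarrow> real)) set" where
  "Hspace a b \<mu> = H10 a b \<times> Mspace a b \<mu>"

definition Hnsq :: "real \<Rightarrow> real \<Rightarrow> (real \<Rightarrow> real)
    \<Rightarrow> (real \<Rightarrow> real) \<times> (real \<Rightarrow> real \<Rightarrow> real) \<Rightarrow> real" where
  "Hnsq a b \<mu> z = tnrm1sq a b (fst z) + Mnsq a b \<mu> (snd z)"

definition kappa :: "(real \<Rightarrow> real) \<Rightarrow> real" where
  "kappa \<mu> = (LINT s:{0<..}|lborel. \<mu> s)"

definition Fprim :: "real \<Rightarrow> (real \<Rightarrow> real) \<Rightarrow> real \<Rightarrow> real" where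
  "Fprim a f x = (LINT y:{a..x}|lborel. f y)"

text \<open>First Dirichlet eigenvalue of -d^2/dx^2 on (a,b).\<close>
definition lambda1 :: "real \<Rightarrow> real \<Rightarrow> real" where
  "lambda1 a b = (pi / (b - a))\<^sup>2"

definition omega :: "real \<Rightarrow> real \<Rightarrow> real" where
  "omega a b = sqrt ((1 + lambda1 a b) / lambda1 a b)"

definition Lambda :: "real \<Rightarrow> real \<Rightarrow> (real \<Rightarrow> real) \<Rightarrow> (real \<Rightarrow> real) \<Rightarrow> real
    \<Rightarrow> (real \<Rightarrow> real) \<times> (real \<Rightarrow> real \<Rightarrow> real) \<Rightarrow> real" where
  "Lambda a b f \<mu> \<epsilon> z =
     Hnsq a b \<mu> z
     + 2 / kappa \<mu> * (LINT s:{0<..}|lborel. \<mu> s * L2ip a b (Fprim a f) (deriv (snd z s)))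
     + 2 / kappa \<mu> * (L2nrm a b (Fprim a f))\<^sup>2
     - \<epsilon> / sqrt (kappa \<mu>) * (LINT s:{0<..}|lborel. \<mu> s * ip1 a b (fst z) (snd z s))"

definition cstar :: "real \<Rightarrow> real \<Rightarrow> (real \<Rightarrow> real) \<Rightarrow> real \<Rightarrow> real \<Rightarrow> real \<Rightarrow> real" where
  "cstar a b f c1 c2 c3 =
     sqrt (c2 / c3) * (c1 / sqrt (c2 * c3) - L2nrm a b (Fprim a f))"

definition Dset :: "real \<Rightarrow> real \<Rightarrow> (real \<Rightarrow> real) \<Rightarrow> (real \<Rightarrow> real) \<Rightarrow> real \<Rightarrow> real \<Rightarrow> real \<Rightarrow> real
    \<Rightarrow> ((real \<Rightarrow> real) \<times> (real \<Rightarrow> real \<Rightarrow> real)) set" where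
  "Dset a b f \<mu> c1 c2 c3 \<epsilon> =
     {z \<in> Hspace a b \<mu>. Lambda a b f \<mu> \<epsilon> z \<le> cstar a b f c1 c2 c3 / \<epsilon>}"

end

theory Submission
  imports Defs
begin

lemma abs_int_le:
  fixes f g :: "'a \<Rightarrow> real"
  assumes fg: "\<And>x. x \<in> A \<Longrightarrow> \<bar>f x\<bar> \<le> g x" and gi: "set_integrable M A g"
  shows "\<bar>LINT x:A|M. f x\<bar> \<le> (LINT x:A|M. g x)"
proof (cases "set_integrable M A f")
  case True
  have 1: "(LINT x:A|M. f x) \<le> (LINT x:A|M. g x)"
    by (rule set_integral_mono[OF True gi]) (use fg in force)
  have 2: "(LINT x:A|M. - f x) \<le> (LINT x:A|M. g x)"
    by (rule set_integral_mono, use True in \<open>simp add: set_integrable_def\<close>, rule gi, use fg in force)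
  have "(LINT x:A|M. - f x) = - (LINT x:A|M. f x)" by (rule set_integral_uminus[OF True])
  with 1 2 show ?thesis by linarith
next
  case False
  then have "(LINT x:A|M. f x) = 0"
    unfolding set_lebesgue_integral_def set_integrable_def
    by (simp add: not_integrable_integral_eq)
  moreover have "0 \<le> (LINT x:A|M. g x)"
    unfolding set_lebesgue_integral_def
    by (rule integral_nonneg_AE) (auto simp: indicator_def intro: order_trans[OF abs_ge_zero fg])
  ultimately show ?thesis by simp
qed

lemma inf_sqrt:
  fixes A B X :: real
  assumes A: "A \<ge> 0" and B: "B \<ge> 0" and h: "\<And>t. t > 0 \<Longrightarrow> X \<le> (t * A + B / t) / 2"
  shows "X \<le> sqrt A * sqrt B"
proof (cases "A > 0 \<and> B > 0")
  case True
  have sA: "sqrt A > 0" "sqrt B > 0" using True by auto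
  have "X \<le> (sqrt B / sqrt A * A + B / (sqrt B / sqrt A)) / 2" using h[of "sqrt B / sqrt A"] sA by simp
  also have "\<dots> = sqrt A * sqrt B"
    using sA A B by (simp add: field_simps)
  finally show ?thesis .
next
  case False
  show ?thesis
  proof (rule ccontr)
    assume "\<not> ?thesis"
    with False A B have X: "X > 0" and AB: "A = 0 \<or> B = 0" by auto
    show False
    proof (cases "A = 0")
      case True
      have tp: "B / X + 1 > 0" using X B by (smt (verit) divide_nonneg_pos)
      have "X \<le> (B / (B / X + 1)) / 2" using h[OF tp] True by simp
      moreover have "B / (B / X + 1) \<le> X" using X B by (simp add: field_simps)
      moreover have "\<And>Y. X \<le> Y / 2 \<Longrightarrow> Y \<le> X \<Longrightarrow> False" using X by linarith
      ultimately show False by blast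
    next
      case False
      with AB have B0: "B = 0" by simp
      have "X \<le> (X / (A + 1) * A) / 2" using h[of "X / (A + 1)"] B0 X A by simp
      moreover have "X / (A + 1) * A \<le> X" using X A by (simp add: field_simps)
      moreover have "\<And>Y. X \<le> Y / 2 \<Longrightarrow> Y \<le> X \<Longrightarrow> False" using X by linarith
      ultimately show False by blast
    qed
  qed
qed

lemma set_int_nonneg:
  fixes f :: "'a \<Rightarrow> real"
  shows "(\<And>x. x \<in> A \<Longrightarrow> 0 \<le> f x) \<Longrightarrow> 0 \<le> (LINT x:A|M. f x)"
  unfolding set_lebesgue_integral_def by (intro integral_nonneg_AE AE_I2) (simp add: indicator_def)

lemma cs_set:
  fixes u v :: "'a \<Rightarrow> real"
  assumes u: "set_integrable M A (\<lambda>x. (u x)\<^sup>2)" and v: "set_integrable M A (\<lambda>x. (v x)\<^sup>2)"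
  shows "\<bar>LINT x:A|M. u x * v x\<bar> \<le> sqrt (LINT x:A|M. (u x)\<^sup>2) * sqrt (LINT x:A|M. (v x)\<^sup>2)"
proof (rule inf_sqrt)
  show "0 \<le> (LINT x:A|M. (u x)\<^sup>2)" "0 \<le> (LINT x:A|M. (v x)\<^sup>2)"
    by (intro set_int_nonneg; simp)+
  fix t :: real assume t: "t > 0"
  have i1: "set_integrable M A (\<lambda>x. t/2 * (u x)\<^sup>2)" using u by (rule set_integrable_mult_right)
  have i2: "set_integrable M A (\<lambda>x. 1/(2*t) * (v x)\<^sup>2)" using v by (rule set_integrable_mult_right)
  have gi: "set_integrable M A (\<lambda>x. t/2 * (u x)\<^sup>2 + 1/(2*t) * (v x)\<^sup>2)"
    by (rule set_integral_add(1)[OF i1 i2])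
  have "\<bar>LINT x:A|M. u x * v x\<bar> \<le> (LINT x:A|M. t/2 * (u x)\<^sup>2 + 1/(2*t) * (v x)\<^sup>2)"
  proof (rule abs_int_le[OF _ gi])
    fix x
    have "0 \<le> (t * u x - v x)\<^sup>2 / t" using t by simp
    also have "\<dots> = 2 * (t/2 * (u x)\<^sup>2 + 1/(2*t) * (v x)\<^sup>2) - 2 * (u x * v x)" using t
      by (simp add: power2_eq_square field_simps) 
    finally have a: "u x * v x \<le> t/2 * (u x)\<^sup>2 + 1/(2*t) * (v x)\<^sup>2" by simp
    have "0 \<le> (t * u x + v x)\<^sup>2 / t" using t by simp
    also have "\<dots> = 2 * (t/2 * (u x)\<^sup>2 + 1/(2*t) * (v x)\<^sup>2) + 2 * (u x * v x)" using t
      by (simp add: power2_eq_square field_simps)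
    finally have b: "- (u x * v x) \<le> t/2 * (u x)\<^sup>2 + 1/(2*t) * (v x)\<^sup>2" by simp
    show "\<bar>u x * v x\<bar> \<le> t/2 * (u x)\<^sup>2 + 1/(2*t) * (v x)\<^sup>2" using a b by linarith
  qed
  also have "\<dots> = t/2 * (LINT x:A|M. (u x)\<^sup>2) + 1/(2*t) * (LINT x:A|M. (v x)\<^sup>2)"
    using set_integral_add(2)[OF i1 i2] by simp
  also have "\<dots> = (t * (LINT x:A|M. (u x)\<^sup>2) + (LINT x:A|M. (v x)\<^sup>2) / t) / 2"
    by (simp add: field_simps)
  finally show "\<bar>LINT x:A|M. u x * v x\<bar> \<le> (t * (LINT x:A|M. (u x)\<^sup>2) + (LINT x:A|M. (v x)\<^sup>2) / t) / 2" .
qed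

lemma indef_cont:
  assumes g: "set_integrable lborel {a..b} (g :: real \<Rightarrow> real)"
  shows "continuous_on {a..b} (\<lambda>x. LINT y:{a..x}|lborel. g y)"
proof -
  have gi: "g integrable_on {a..b}" by (rule set_borel_integral_eq_integral(1)[OF g])
  have "\<And>x. x \<in> {a..b} \<Longrightarrow> integral {a..x} g = (LINT y:{a..x}|lborel. g y)"
  proof -
    fix x assume x: "x \<in> {a..b}"
    have "set_integrable lborel {a..x} g" by (rule set_integrable_subset[OF g]) (use x in auto)
    then show "integral {a..x} g = (LINT y:{a..x}|lborel. g y)"
      by (simp add: set_borel_integral_eq_integral(2))
  qed
  then show ?thesis
    by (rule continuous_on_eq[OF indefinite_integral_continuous_1[OF gi]])
qed

lemma L2_int:
  assumes "L2fun a b g"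
  shows "set_integrable lborel {a..b} g"
proof -
  have m: "set_borel_measurable lborel {a..b} g" and s: "set_integrable lborel {a..b} (\<lambda>x. (g x)\<^sup>2)"
    using assms by (auto simp: L2fun_def)
  have c: "set_integrable lborel {a..b} (\<lambda>x. (1::real))"
    unfolding set_integrable_def by (rule borel_integrable_compact) auto
  have f: "set_integrable lborel {a..b} (\<lambda>x. 1 + (g x)\<^sup>2)" by (rule set_integral_add(1)[OF c s])
  show ?thesis
    unfolding set_integrable_def
  proof (rule Bochner_Integration.integrable_bound)
    show "integrable lborel (\<lambda>x. indicator {a..b} x *\<^sub>R (1 + (g x)\<^sup>2))" using f by (simp add: set_integrable_def)
    show "(\<lambda>x. indicator {a..b} x *\<^sub>R g x) \<in> borel_measurable lborel" using m by (simp add: set_borel_measurable_def)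
    have yb: "\<And>y::real. \<bar>y\<bar> \<le> 1 + y\<^sup>2"
    proof -
      fix y :: real
      show "\<bar>y\<bar> \<le> 1 + y\<^sup>2"
      proof (cases "\<bar>y\<bar> \<le> 1")
        case True then show ?thesis by (simp add: add_increasing2)
      next
        case False
        then have "\<bar>y\<bar> * 1 \<le> \<bar>y\<bar> * \<bar>y\<bar>" by (intro mult_left_mono) auto
        then show ?thesis by (simp add: power2_eq_square abs_mult_self_eq)
      qed
    qed
    have nb: "norm (indicator {a..b} x *\<^sub>R g x) \<le> norm (indicator {a..b} x *\<^sub>R (1 + (g x)\<^sup>2))" for x
    proof (cases "x \<in> {a..b}")
      case True
      have "\<bar>1 + (g x)\<^sup>2\<bar> = 1 + (g x)\<^sup>2" by simp
      with True yb[of "g x"] show ?thesis by simp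
    qed simp
    show "AE x in lborel. norm (indicator {a..b} x *\<^sub>R g x) \<le> norm (indicator {a..b} x *\<^sub>R (1 + (g x)\<^sup>2))"
      by (intro AE_I2 nb)
  qed
qed

lemma H10_cont:
  assumes "u \<in> H10 a b"
  shows "continuous_on {a..b} u"
proof -
  have "set_integrable lborel {a..b} (deriv u)" using assms by (intro L2_int) (simp add: H10_def)
  from indef_cont[OF this] show ?thesis
    by (rule continuous_on_eq) (use assms in \<open>auto simp: H10_def\<close>)
qed

lemma cont_sq_int:
  assumes "continuous_on {a..b} (u::real\<Rightarrow>real)"
  shows "set_integrable lborel {a..b} (\<lambda>x. (u x)\<^sup>2)"
  unfolding set_integrable_def by (rule borel_integrable_compact) (auto intro!: continuous_intros assms)

lemma H10_sq: "u \<in> H10 a b \<Longrightarrow> set_integrable lborel {a..b} (\<lambda>x. (u x)\<^sup>2)"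
  by (rule cont_sq_int[OF H10_cont])

lemma H10_dsq: "u \<in> H10 a b \<Longrightarrow> set_integrable lborel {a..b} (\<lambda>x. (deriv u x)\<^sup>2)"
  by (simp add: H10_def L2fun_def)

lemma meas_Icc: "a \<le> x \<Longrightarrow> measure lborel {a..x} = x - a"
  by (simp add: measure_def)

lemma meas_Ioc: "x \<le> b \<Longrightarrow> measure lborel {x<..b} = b - x"
  by (simp add: measure_def)

lemma const_int: "set_integrable lborel {a..b::real} (\<lambda>x. c::real)"
  unfolding set_integrable_def by (rule borel_integrable_compact) auto

lemma pw_left:
  assumes u: "u \<in> H10 a b" and x: "x \<in> {a..b}"
  shows "(u x)\<^sup>2 \<le> (x - a) * (LINT y:{a..x}|lborel. (deriv u y)\<^sup>2)"
proof -
  have ux: "u x = (LINT y:{a..x}|lborel. 1 * deriv u y)" using u x by (simp add: H10_def)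
  have i1: "set_integrable lborel {a..x} (\<lambda>y. (1::real)\<^sup>2)" by (simp add: const_int)
  have i2: "set_integrable lborel {a..x} (\<lambda>y. (deriv u y)\<^sup>2)"
    by (rule set_integrable_subset[OF H10_dsq[OF u]]) (use x in auto)
  have "\<bar>u x\<bar> \<le> sqrt (LINT y:{a..x}|lborel. (1::real)\<^sup>2) * sqrt (LINT y:{a..x}|lborel. (deriv u y)\<^sup>2)"
    unfolding ux by (rule cs_set[OF i1 i2])
  also have "(LINT y:{a..x}|lborel. (1::real)\<^sup>2) = x - a"
    using x by (simp add: set_integral_const meas_Icc)
  finally have "\<bar>u x\<bar>\<^sup>2 \<le> (sqrt (x - a) * sqrt (LINT y:{a..x}|lborel. (deriv u y)\<^sup>2))\<^sup>2"
    by (rule power_mono) simp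
  also have "\<dots> = (x - a) * (LINT y:{a..x}|lborel. (deriv u y)\<^sup>2)"
    using x set_int_nonneg[of "{a..x}" "\<lambda>y. (deriv u y)\<^sup>2" lborel]
    by (simp add: power_mult_distrib)
  finally show ?thesis by simp
qed

lemma split_ab:
  assumes x: "x \<in> {a..b}" and g: "set_integrable lborel {a..b} (g::real\<Rightarrow>real)"
  shows "(LINT y:{a..b}|lborel. g y) = (LINT y:{a..x}|lborel. g y) + (LINT y:{x<..b}|lborel. g y)"
    "set_integrable lborel {a..x} g" "set_integrable lborel {x<..b} g"
proof -
  show 1: "set_integrable lborel {a..x} g" by (rule set_integrable_subset[OF g]) (use x in auto)
  show 2: "set_integrable lborel {x<..b} g" by (rule set_integrable_subset[OF g]) (use x in auto)
  have "{a..b} = {a..x} \<union> {x<..b}" "{a..x} \<inter> {x<..b} = {}" using x by auto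
  then show "(LINT y:{a..b}|lborel. g y) = (LINT y:{a..x}|lborel. g y) + (LINT y:{x<..b}|lborel. g y)"
    using set_integral_Un[of "{a..x}" "{x<..b}" lborel g, OF _ 1 2] by auto
qed

lemma pw_right:
  assumes u: "u \<in> H10 a b" and x: "x \<in> {a..b}"
  shows "(u x)\<^sup>2 \<le> (b - x) * (LINT y:{x<..b}|lborel. (deriv u y)\<^sup>2)"
proof -
  have ab: "a \<le> b" using x by auto
  have di: "set_integrable lborel {a..b} (deriv u)" using u by (intro L2_int) (simp add: H10_def)
  have "0 = u b" using u by (simp add: H10_def)
  also have "\<dots> = (LINT y:{a..b}|lborel. deriv u y)"
  proof -
    have "\<forall>x\<in>{a..b}. u x = (LINT y:{a..x}|lborel. deriv u y)" using u by (simp add: H10_def)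
    then show ?thesis using ab by auto
  qed
  also have "\<dots> = u x + (LINT y:{x<..b}|lborel. deriv u y)"
    using split_ab(1)[OF x di] u x by (simp add: H10_def)
  finally have "u x = - (LINT y:{x<..b}|lborel. deriv u y)" by linarith
  also have "\<dots> = (LINT y:{x<..b}|lborel. (-1) * deriv u y)"
    using set_integral_mult_right[where a="-1" and A="{x<..b}" and M=lborel and f="deriv u"] by simp
  finally have ux: "u x = (LINT y:{x<..b}|lborel. (-1) * deriv u y)" .
  have i1: "set_integrable lborel {x<..b} (\<lambda>y. (-1::real)\<^sup>2)"
    by (rule set_integrable_subset[OF const_int[of a b]]) (use x in auto)
  have i2: "set_integrable lborel {x<..b} (\<lambda>y. (deriv u y)\<^sup>2)"
    by (rule set_integrable_subset[OF H10_dsq[OF u]]) (use x in auto)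
  have "\<bar>u x\<bar> \<le> sqrt (LINT y:{x<..b}|lborel. (-1::real)\<^sup>2) * sqrt (LINT y:{x<..b}|lborel. (deriv u y)\<^sup>2)"
    unfolding ux by (rule cs_set[OF i1 i2])
  also have "(LINT y:{x<..b}|lborel. (-1::real)\<^sup>2) = b - x"
    using x by (simp add: set_integral_const meas_Ioc)
  finally have "\<bar>u x\<bar>\<^sup>2 \<le> (sqrt (b - x) * sqrt (LINT y:{x<..b}|lborel. (deriv u y)\<^sup>2))\<^sup>2"
    by (rule power_mono) simp
  also have "\<dots> = (b - x) * (LINT y:{x<..b}|lborel. (deriv u y)\<^sup>2)"
    using x set_int_nonneg[of "{x<..b}" "\<lambda>y. (deriv u y)\<^sup>2" lborel]
    by (simp add: power_mult_distrib)
  finally show ?thesis by simp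
qed

lemma pw_both:
  assumes u: "u \<in> H10 a b" and x: "x \<in> {a..b}"
  shows "(u x)\<^sup>2 \<le> (x - a) * (LINT y:{a..b}|lborel. (deriv u y)\<^sup>2)"
    "(u x)\<^sup>2 \<le> (b - x) * (LINT y:{a..b}|lborel. (deriv u y)\<^sup>2)"
proof -
  note sp = split_ab[OF x H10_dsq[OF u]]
  have n1: "0 \<le> (LINT y:{a..x}|lborel. (deriv u y)\<^sup>2)" "0 \<le> (LINT y:{x<..b}|lborel. (deriv u y)\<^sup>2)"
    by (intro set_int_nonneg; simp)+
  have "(x - a) * (LINT y:{a..x}|lborel. (deriv u y)\<^sup>2) \<le> (x - a) * (LINT y:{a..b}|lborel. (deriv u y)\<^sup>2)"
    using x n1 sp(1) by (intro mult_left_mono) auto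
  then show "(u x)\<^sup>2 \<le> (x - a) * (LINT y:{a..b}|lborel. (deriv u y)\<^sup>2)" using pw_left[OF u x] by linarith
  have "(b - x) * (LINT y:{x<..b}|lborel. (deriv u y)\<^sup>2) \<le> (b - x) * (LINT y:{a..b}|lborel. (deriv u y)\<^sup>2)"
    using x n1 sp(1) by (intro mult_left_mono) auto
  then show "(u x)\<^sup>2 \<le> (b - x) * (LINT y:{a..b}|lborel. (deriv u y)\<^sup>2)" using pw_right[OF u x] by linarith
qed

lemma theta_bounds:
  fixes t :: real assumes "0 \<le> t" "t \<le> 1"
  shows "0 \<le> 1 - 3*t*t + 2*t*t*t" "1 - 3*t*t + 2*t*t*t \<le> 1"
proof -
  have "1 - 3*t*t + 2*t*t*t = (1-t)*(1-t)*(1+2*t)" by (simp add: algebra_simps)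
  also have "\<dots> \<ge> 0" using assms by simp
  finally show "0 \<le> 1 - 3*t*t + 2*t*t*t" .
  have "3*t*t - 2*t*t*t = t*t*(3-2*t)" by (simp add: algebra_simps)
  also have "\<dots> \<ge> 0" using assms by simp
  finally show "1 - 3*t*t + 2*t*t*t \<le> 1" by simp
qed

lemma poincare:
  assumes u: "u \<in> H10 a b" and ab: "a < b"
  shows "(LINT x:{a..b}|lborel. (u x)\<^sup>2) \<le> 3/10 * (b-a)\<^sup>2 * (LINT x:{a..b}|lborel. (deriv u x)\<^sup>2)"
proof -
  define L where "L = b - a"
  have L: "L > 0" using ab by (simp add: L_def)
  define K where "K = (LINT x:{a..b}|lborel. (deriv u x)\<^sup>2)"
  define P where "P = (\<lambda>t::real. 4*t*t*t*t - 8*t*t*t + 3*t*t + t)"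
  define c where "c = 1 / L"
  define h where "h = (\<lambda>x. L * P ((x - a) * c))"
  define H where "H = (\<lambda>x. L*L * (4/5*((x-a)*c)^5 - 2*((x-a)*c)^4 + ((x-a)*c)^3 + 1/2*((x-a)*c)^2))"
  have hc: "continuous_on {a..b} h" unfolding h_def P_def by (auto intro!: continuous_intros)
  have pw: "(u x)\<^sup>2 \<le> K * h x" if x: "x \<in> {a..b}" for x
  proof -
    define t where "t = (x - a) * c"
    have t01: "0 \<le> t" "t \<le> 1" using x L by (auto simp: t_def c_def L_def field_simps)
    define \<theta> where "\<theta> = 1 - 3*t*t + 2*t*t*t"
    have th: "0 \<le> \<theta>" "\<theta> \<le> 1" using theta_bounds[OF t01] by (auto simp: \<theta>_def)
    have xa: "x - a = t * L" and bx: "b - x = (1 - t) * L" using L by (auto simp: t_def c_def L_def field_simps)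
    have l: "(u x)\<^sup>2 \<le> K * (t * L)" and r: "(u x)\<^sup>2 \<le> K * ((1 - t) * L)"
      using pw_both[OF u x] xa bx by (auto simp: K_def mult.commute)
    have "(u x)\<^sup>2 = \<theta> * (u x)\<^sup>2 + (1 - \<theta>) * (u x)\<^sup>2" by (simp add: algebra_simps)
    also have "\<dots> \<le> \<theta> * (K * (t * L)) + (1 - \<theta>) * (K * ((1 - t) * L))"
      using th l r by (intro add_mono mult_left_mono) auto
    also have "\<dots> = K * (L * P t)" unfolding P_def \<theta>_def by algebra
    also have "\<dots> = K * h x" by (simp add: h_def t_def)
    finally show ?thesis .
  qed
  have Hd: "(H has_vector_derivative h x) (at x within {a..b})" for x
  proof -
    have "(H has_real_derivative (L*L*c*P((x-a)*c))) (at x)"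
      unfolding H_def
      by (rule derivative_eq_intros refl)+ (simp add: P_def field_simps eval_nat_numeral)
    moreover have "L*L*c*P((x-a)*c) = h x" using L by (simp add: h_def c_def)
    ultimately have "(H has_real_derivative h x) (at x)" by simp
    then show ?thesis
      by (simp add: has_real_derivative_iff_has_vector_derivative[symmetric] has_field_derivative_at_within)
  qed
  have Ih: "(LINT x:{a..b}|lborel. h x) = H b - H a"
    unfolding set_lebesgue_integral_def
    by (rule integral_FTC_atLeastAtMost[OF _ Hd hc]) (use ab in auto)
  also have "\<dots> = 3/10 * L\<^sup>2"
  proof -
    have "(b - a) * c = 1" using L by (simp add: c_def L_def)
    then show ?thesis by (simp add: H_def L_def power2_eq_square)
  qed
  finally have Ih: "(LINT x:{a..b}|lborel. h x) = 3/10 * L\<^sup>2" .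
  have hi: "set_integrable lborel {a..b} (\<lambda>x. K * h x)"
    unfolding set_integrable_def by (rule borel_integrable_compact) (auto intro!: continuous_intros hc)
  have "(LINT x:{a..b}|lborel. (u x)\<^sup>2) \<le> (LINT x:{a..b}|lborel. K * h x)"
    by (rule set_integral_mono[OF H10_sq[OF u] hi pw])
  also have "\<dots> = K * (3/10 * L\<^sup>2)" using Ih by simp
  also have "\<dots> = 3/10 * (b-a)\<^sup>2 * K" by (simp add: L_def)
  finally show ?thesis by (simp add: K_def)
qed

lemma cs_L2:
  assumes "set_integrable lborel {a..b} (\<lambda>x. (v x)\<^sup>2)" "set_integrable lborel {a..b} (\<lambda>x. (w x)\<^sup>2)"
  shows "\<bar>L2ip a b v w\<bar> \<le> L2nrm a b v * L2nrm a b w"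
  using cs_set[OF assms] by (simp add: L2ip_def L2nrm_def power2_eq_square)

lemma L2nrm_nonneg: "0 \<le> L2nrm a b v"
  unfolding L2nrm_def L2ip_def by (simp add: set_int_nonneg)

lemma L2nrm_sq: "(L2nrm a b v)\<^sup>2 = (LINT x:{a..b}|lborel. (v x)\<^sup>2)"
  unfolding L2nrm_def L2ip_def by (simp add: set_int_nonneg power2_eq_square)

lemma poincare_nrm:
  assumes u: "u \<in> H10 a b" and ab: "a < b"
  shows "L2nrm a b u \<le> sqrt (3/10 * (b-a)\<^sup>2) * nrm1 a b u"
proof -
  have "(L2nrm a b u)\<^sup>2 \<le> (sqrt (3/10 * (b-a)\<^sup>2) * nrm1 a b u)\<^sup>2"
    using poincare[OF u ab] by (simp add: L2nrm_sq nrm1_def power_mult_distrib)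
  then show ?thesis
    by (rule power2_le_imp_le) (simp add: nrm1_def L2nrm_nonneg)
qed

lemma weighted:
  fixes T n \<mu> :: "real \<Rightarrow> real"
  assumes T: "\<And>s. s > 0 \<Longrightarrow> \<bar>T s\<bar> \<le> \<mu> s * C * n s" and C: "C \<ge> 0"
    and mu: "\<And>s. s > 0 \<Longrightarrow> \<mu> s \<ge> 0" and mi: "set_integrable lborel {0<..} \<mu>"
    and ni: "set_integrable lborel {0<..} (\<lambda>s. \<mu> s * (n s)\<^sup>2)"
  shows "\<bar>LINT s:{0<..}|lborel. T s\<bar> \<le> C * sqrt (LINT s:{0<..}|lborel. \<mu> s) * sqrt (LINT s:{0<..}|lborel. \<mu> s * (n s)\<^sup>2)"
proof -
  let ?K = "LINT s:{0<..}|lborel. \<mu> s" and ?M = "LINT s:{0<..}|lborel. \<mu> s * (n s)\<^sup>2"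
  have K0: "?K \<ge> 0" by (rule set_int_nonneg) (use mu in auto)
  have M0: "?M \<ge> 0" by (rule set_int_nonneg) (use mu in auto)
  have "\<bar>LINT s:{0<..}|lborel. T s\<bar> \<le> sqrt ?M * sqrt (C\<^sup>2 * ?K)"
  proof (rule inf_sqrt[OF M0])
    show "0 \<le> C\<^sup>2 * ?K" using K0 by simp
    fix t :: real assume t: "t > 0"
    have i1: "set_integrable lborel {0<..} (\<lambda>s. t/2 * (\<mu> s * (n s)\<^sup>2))" using ni by (rule set_integrable_mult_right)
    have i2: "set_integrable lborel {0<..} (\<lambda>s. C\<^sup>2/(2*t) * \<mu> s)" using mi by (rule set_integrable_mult_right)
    have gi: "set_integrable lborel {0<..} (\<lambda>s. t/2 * (\<mu> s * (n s)\<^sup>2) + C\<^sup>2/(2*t) * \<mu> s)"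
      by (rule set_integral_add(1)[OF i1 i2])
    have "\<bar>LINT s:{0<..}|lborel. T s\<bar> \<le> (LINT s:{0<..}|lborel. t/2 * (\<mu> s * (n s)\<^sup>2) + C\<^sup>2/(2*t) * \<mu> s)"
    proof (rule abs_int_le[OF _ gi])
      fix s :: real assume "s \<in> {0<..}"
      then have s: "s > 0" by simp
      have "0 \<le> \<mu> s * ((t * n s - C)\<^sup>2 / (2 * t))" using mu[OF s] t by simp
      also have "\<mu> s * ((t * n s - C)\<^sup>2 / (2 * t)) = t/2 * (\<mu> s * (n s)\<^sup>2) + C\<^sup>2/(2*t) * \<mu> s - \<mu> s * C * n s"
        using t by (simp add: power2_eq_square field_simps)
      finally show "\<bar>T s\<bar> \<le> t/2 * (\<mu> s * (n s)\<^sup>2) + C\<^sup>2/(2*t) * \<mu> s" using T[OF s] by linarith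
    qed
    also have "\<dots> = t/2 * ?M + C\<^sup>2/(2*t) * ?K"
      using set_integral_add(2)[OF i1 i2] by simp
    also have "\<dots> = (t * ?M + C\<^sup>2 * ?K / t) / 2" by (simp add: field_simps)
    finally show "\<bar>LINT s:{0<..}|lborel. T s\<bar> \<le> (t * ?M + C\<^sup>2 * ?K / t) / 2" .
  qed
  also have "\<dots> = C * sqrt ?K * sqrt ?M" using C by (simp add: real_sqrt_mult)
  finally show ?thesis .
qed

lemma F_sq: "L2fun a b f \<Longrightarrow> set_integrable lborel {a..b} (\<lambda>x. (Fprim a f x)\<^sup>2)"
  unfolding Fprim_def by (rule cont_sq_int[OF indef_cont[OF L2_int]])

lemma core:
  fixes \<mu> :: "real \<Rightarrow> real"
  assumes ab: "a < b" and fL: "L2fun a b f" and mu: "\<forall>s>0. \<mu> s \<ge> 0"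
    and mi: "set_integrable lborel {0<..} \<mu>" and z: "z \<in> Hspace a b \<mu>"
  shows "\<bar>LINT s:{0<..}|lborel. \<mu> s * L2ip a b (Fprim a f) (deriv (snd z s))\<bar>
           \<le> L2nrm a b (Fprim a f) * sqrt (kappa \<mu>) * sqrt (Mnsq a b \<mu> (snd z))"
    "\<bar>LINT s:{0<..}|lborel. \<mu> s * ip1 a b (fst z) (snd z s)\<bar>
           \<le> (L2nrm a b (fst z) * sqrt (3/10*(b-a)\<^sup>2) + nrm1 a b (fst z)) * sqrt (kappa \<mu>) * sqrt (Mnsq a b \<mu> (snd z))"
    "Hnsq a b \<mu> z = (L2nrm a b (fst z))\<^sup>2 + (nrm1 a b (fst z))\<^sup>2 + Mnsq a b \<mu> (snd z)"
    "0 \<le> Mnsq a b \<mu> (snd z)"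
proof -
  obtain u \<eta> where zz: "z = (u, \<eta>)" by (cases z)
  have u: "u \<in> H10 a b" and eta: "\<eta> \<in> Mspace a b \<mu>" using z by (auto simp: zz Hspace_def)
  have es: "\<And>s. s > 0 \<Longrightarrow> \<eta> s \<in> H10 a b" and ni: "set_integrable lborel {0<..} (\<lambda>s. \<mu> s * (nrm1 a b (\<eta> s))\<^sup>2)"
    using eta by (auto simp: Mspace_def)
  have mu': "\<And>s. s > 0 \<Longrightarrow> \<mu> s \<ge> 0" using mu by auto
  have n0: "\<And>v. 0 \<le> nrm1 a b v" by (simp add: nrm1_def L2nrm_nonneg)
  show "0 \<le> Mnsq a b \<mu> (snd z)" unfolding Mnsq_def zz snd_conv
    by (rule set_int_nonneg) (use mu' in auto)
  show "Hnsq a b \<mu> z = (L2nrm a b (fst z))\<^sup>2 + (nrm1 a b (fst z))\<^sup>2 + Mnsq a b \<mu> (snd z)"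
    by (simp add: Hnsq_def tnrm1sq_def)
  have "\<bar>LINT s:{0<..}|lborel. \<mu> s * L2ip a b (Fprim a f) (deriv (\<eta> s))\<bar>
           \<le> L2nrm a b (Fprim a f) * sqrt (kappa \<mu>) * sqrt (Mnsq a b \<mu> \<eta>)"
    unfolding kappa_def Mnsq_def
  proof (rule weighted[OF _ L2nrm_nonneg mu' mi ni])
    fix s :: real assume s: "s > 0"
    have "\<bar>L2ip a b (Fprim a f) (deriv (\<eta> s))\<bar> \<le> L2nrm a b (Fprim a f) * nrm1 a b (\<eta> s)"
      unfolding nrm1_def by (rule cs_L2[OF F_sq[OF fL] H10_dsq[OF es[OF s]]])
    then show "\<bar>\<mu> s * L2ip a b (Fprim a f) (deriv (\<eta> s))\<bar> \<le> \<mu> s * L2nrm a b (Fprim a f) * nrm1 a b (\<eta> s)"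
      using mu'[OF s] by (simp add: abs_mult mult.assoc mult_left_mono)
  qed
  then show "\<bar>LINT s:{0<..}|lborel. \<mu> s * L2ip a b (Fprim a f) (deriv (snd z s))\<bar>
           \<le> L2nrm a b (Fprim a f) * sqrt (kappa \<mu>) * sqrt (Mnsq a b \<mu> (snd z))" by (simp add: zz)
  let ?C = "L2nrm a b u * sqrt (3/10*(b-a)\<^sup>2) + nrm1 a b u"
  have C0: "0 \<le> ?C" by (simp add: L2nrm_nonneg n0)
  have "\<bar>LINT s:{0<..}|lborel. \<mu> s * ip1 a b u (\<eta> s)\<bar> \<le> ?C * sqrt (kappa \<mu>) * sqrt (Mnsq a b \<mu> \<eta>)"
    unfolding kappa_def Mnsq_def
  proof (rule weighted[OF _ C0 mu' mi ni])
    fix s :: real assume s: "s > 0"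
    have e: "\<eta> s \<in> H10 a b" by (rule es[OF s])
    have 1: "\<bar>L2ip a b u (\<eta> s)\<bar> \<le> L2nrm a b u * L2nrm a b (\<eta> s)"
      by (rule cs_L2[OF H10_sq[OF u] H10_sq[OF e]])
    have 2: "\<bar>L2ip a b (deriv u) (deriv (\<eta> s))\<bar> \<le> nrm1 a b u * nrm1 a b (\<eta> s)"
      unfolding nrm1_def by (rule cs_L2[OF H10_dsq[OF u] H10_dsq[OF e]])
    have 3: "L2nrm a b u * L2nrm a b (\<eta> s) \<le> L2nrm a b u * (sqrt (3/10*(b-a)\<^sup>2) * nrm1 a b (\<eta> s))"
      by (rule mult_left_mono[OF poincare_nrm[OF e ab] L2nrm_nonneg])
    have "\<bar>ip1 a b u (\<eta> s)\<bar> \<le> ?C * nrm1 a b (\<eta> s)"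
      using 1 2 3 unfolding ip1_def by (simp add: algebra_simps)
    then show "\<bar>\<mu> s * ip1 a b u (\<eta> s)\<bar> \<le> \<mu> s * ?C * nrm1 a b (\<eta> s)"
      using mu'[OF s] by (simp add: abs_mult mult.assoc mult_left_mono)
  qed
  then show "\<bar>LINT s:{0<..}|lborel. \<mu> s * ip1 a b (fst z) (snd z s)\<bar>
           \<le> (L2nrm a b (fst z) * sqrt (3/10*(b-a)\<^sup>2) + nrm1 a b (fst z)) * sqrt (kappa \<mu>) * sqrt (Mnsq a b \<mu> (snd z))"
    by (simp add: zz)
qed

lemma lin_aux: fixes P Q A B C D Y :: real
  shows "0 \<le> 9*P - 12*A + 4*B \<Longrightarrow> 0 \<le> 9*Q - 12*C + 4*D \<Longrightarrow> 4*B + 4*D \<le> 3*Y \<Longrightarrow> 4*A + 4*C \<le> 3*P + 3*Q + Y"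
  by linarith

lemma lin_aux2: fixes P Q A B C D Y :: real
  shows "0 \<le> P - 2*A + B \<Longrightarrow> 0 \<le> Q - 2*C + D \<Longrightarrow> 4*B + 4*D \<le> 3*Y \<Longrightarrow> 0 \<le> Y \<Longrightarrow> 2*A + 2*C \<le> P + Q + 2*Y"
  by linarith

lemma fin_low: fixes P Q y i1 f2 j x :: real
  shows "-(y/2) \<le> i1 + f2 \<Longrightarrow> j \<le> x \<Longrightarrow> 4*x \<le> 3*P + 3*Q + y \<Longrightarrow> P/4+Q/4+y/4 \<le> P+Q+y+i1+f2-j"
  by linarith

lemma fin_up: fixes P Q y i1 f2 j x F :: real
  shows "i1 \<le> F + y \<Longrightarrow> -j \<le> x \<Longrightarrow> 2*x \<le> P + Q + 2*y \<Longrightarrow> 0 \<le> P \<Longrightarrow> 0 \<le> Q \<Longrightarrow> 0 \<le> y \<Longrightarrow> 0 \<le> F \<Longrightarrow> f2 = 2*F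
   \<Longrightarrow> P+Q+y+i1+f2-j \<le> 3*P+3*Q+3*y + 3*F"
  by linarith

lemma quad_aux:
  fixes p q Y e \<sigma> :: real
  assumes ec: "e\<^sup>2 * (\<sigma>\<^sup>2 + 1) \<le> 3/4"
  shows "4 * (e * (p * \<sigma> + q) * Y) \<le> 3 * p\<^sup>2 + 3 * q\<^sup>2 + Y\<^sup>2"
    "2 * (e * (p * \<sigma> + q) * Y) \<le> p\<^sup>2 + q\<^sup>2 + 2 * Y\<^sup>2"
proof -
  have ec': "4 * (e\<^sup>2 * \<sigma>\<^sup>2 * Y\<^sup>2) + 4 * (e\<^sup>2 * Y\<^sup>2) \<le> 3 * Y\<^sup>2"
  proof -
    have "e\<^sup>2 * (\<sigma>\<^sup>2 + 1) * Y\<^sup>2 \<le> 3/4 * Y\<^sup>2" by (rule mult_right_mono[OF ec]) simp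
    then show ?thesis by (simp add: algebra_simps)
  qed
  have e1: "(3 * p - 2 * (e * \<sigma> * Y))\<^sup>2 = 9 * p\<^sup>2 - 12 * (e * \<sigma> * p * Y) + 4 * (e\<^sup>2 * \<sigma>\<^sup>2 * Y\<^sup>2)"
    by (simp add: power2_eq_square algebra_simps)
  have e2: "(3 * q - 2 * (e * Y))\<^sup>2 = 9 * q\<^sup>2 - 12 * (e * q * Y) + 4 * (e\<^sup>2 * Y\<^sup>2)"
    by (simp add: power2_eq_square algebra_simps)
  have X: "e * (p * \<sigma> + q) * Y = e * \<sigma> * p * Y + e * q * Y" by (simp add: algebra_simps)
  have "4 * (e * \<sigma> * p * Y) + 4 * (e * q * Y) \<le> 3 * p\<^sup>2 + 3 * q\<^sup>2 + Y\<^sup>2"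
    by (rule lin_aux[OF _ _ ec']) (simp_all only: e1[symmetric] e2[symmetric] zero_le_power2)
  then show "4 * (e * (p * \<sigma> + q) * Y) \<le> 3 * p\<^sup>2 + 3 * q\<^sup>2 + Y\<^sup>2" unfolding X by (simp add: algebra_simps)
  have f1: "(p - e * \<sigma> * Y)\<^sup>2 = p\<^sup>2 - 2 * (e * \<sigma> * p * Y) + e\<^sup>2 * \<sigma>\<^sup>2 * Y\<^sup>2"
    by (simp add: power2_eq_square algebra_simps)
  have f2: "(q - e * Y)\<^sup>2 = q\<^sup>2 - 2 * (e * q * Y) + e\<^sup>2 * Y\<^sup>2"
    by (simp add: power2_eq_square algebra_simps)
  have "2 * (e * \<sigma> * p * Y) + 2 * (e * q * Y) \<le> p\<^sup>2 + q\<^sup>2 + 2 * Y\<^sup>2"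
    by (rule lin_aux2[OF _ _ ec']) (simp_all only: f1[symmetric] f2[symmetric] zero_le_power2)
  then show "2 * (e * (p * \<sigma> + q) * Y) \<le> p\<^sup>2 + q\<^sup>2 + 2 * Y\<^sup>2" unfolding X by (simp add: algebra_simps)
qed

lemma lower_alg:
  fixes p q Y Fn k I1 I2 e \<sigma> :: real
  assumes k: "k > 0" and nn: "p \<ge> 0" "q \<ge> 0" "Y \<ge> 0" "Fn \<ge> 0" "\<sigma> \<ge> 0" and e: "e > 0"
    and ec: "e\<^sup>2 * (\<sigma>\<^sup>2 + 1) \<le> 3/4"
    and I1: "\<bar>I1\<bar> \<le> Fn * sqrt k * Y" and I2: "\<bar>I2\<bar> \<le> (p * \<sigma> + q) * sqrt k * Y"
  shows "(p\<^sup>2 + q\<^sup>2 + Y\<^sup>2) / 4 \<le> p\<^sup>2 + q\<^sup>2 + Y\<^sup>2 + 2 / k * I1 + 2 / k * Fn\<^sup>2 - e / sqrt k * I2"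
proof -
  define sk where "sk = sqrt k"
  have sk: "sk > 0" "sk * sk = k" using k by (auto simp: sk_def)
  have "- (Fn * sk * Y) \<le> I1" using I1 by (simp add: sk_def abs_le_iff)
  then have "2 / k * I1 \<ge> 2 / k * (- (Fn * sk * Y))" by (rule mult_left_mono) (use k in simp)
  moreover have "2 / k * Fn\<^sup>2 + 2 / k * (- (Fn * sk * Y)) + Y\<^sup>2 / 2 = 2 / k * (Fn - sk * Y / 2)\<^sup>2"
    using sk k by (simp add: field_simps power2_eq_square)
  moreover have "0 \<le> 2 / k * (Fn - sk * Y / 2)\<^sup>2" using k by simp
  ultimately have A: "- (Y\<^sup>2 / 2) \<le> 2 / k * I1 + 2 / k * Fn\<^sup>2" by linarith
  have "I2 \<le> (p * \<sigma> + q) * sk * Y" using I2 by (simp add: sk_def abs_le_iff)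
  then have "e / sk * I2 \<le> e / sk * ((p * \<sigma> + q) * sk * Y)"
    by (rule mult_left_mono) (use e sk in simp)
  also have "\<dots> = e * (p * \<sigma> + q) * Y" using sk by (simp add: field_simps)
  finally have B: "e / sqrt k * I2 \<le> e * (p * \<sigma> + q) * Y" by (simp add: sk_def)
  have "p\<^sup>2/4 + q\<^sup>2/4 + Y\<^sup>2/4 \<le> p\<^sup>2 + q\<^sup>2 + Y\<^sup>2 + 2 / k * I1 + 2 / k * Fn\<^sup>2 - e / sqrt k * I2"
    by (rule fin_low[OF A B quad_aux(1)[OF ec]])
  moreover have "(p\<^sup>2 + q\<^sup>2 + Y\<^sup>2) / 4 = p\<^sup>2/4 + q\<^sup>2/4 + Y\<^sup>2/4" by (simp add: add_divide_distrib)
  ultimately show ?thesis by linarith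
qed

lemma upper_alg:
  fixes p q Y Fn k I1 I2 e \<sigma> :: real
  assumes k: "k > 0" and nn: "p \<ge> 0" "q \<ge> 0" "Y \<ge> 0" "Fn \<ge> 0" "\<sigma> \<ge> 0" and e: "e > 0"
    and ec: "e\<^sup>2 * (\<sigma>\<^sup>2 + 1) \<le> 3/4"
    and I1: "\<bar>I1\<bar> \<le> Fn * sqrt k * Y" and I2: "\<bar>I2\<bar> \<le> (p * \<sigma> + q) * sqrt k * Y"
  shows "p\<^sup>2 + q\<^sup>2 + Y\<^sup>2 + 2 / k * I1 + 2 / k * Fn\<^sup>2 - e / sqrt k * I2 \<le> 3 * p\<^sup>2 + 3 * q\<^sup>2 + 3 * Y\<^sup>2 + 3 * (Fn\<^sup>2 / k)"
proof -
  define sk where "sk = sqrt k"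
  have sk: "sk > 0" "sk * sk = k" using k by (auto simp: sk_def)
  have "I1 \<le> Fn * sk * Y" using I1 by (simp add: sk_def abs_le_iff)
  then have "2 / k * I1 \<le> 2 / k * (Fn * sk * Y)" by (rule mult_left_mono) (use k in simp)
  also have "\<dots> = 2 * (Fn / sk) * Y" using sk by (simp add: sk(2)[symmetric] field_simps)
  also have "\<dots> \<le> (Fn / sk)\<^sup>2 + Y\<^sup>2"
  proof -
    have "0 \<le> (Fn / sk - Y)\<^sup>2" by simp
    then show ?thesis by (simp add: power2_eq_square algebra_simps)
  qed
  also have "(Fn / sk)\<^sup>2 = Fn\<^sup>2 / k" using sk by (simp add: power_divide power2_eq_square)
  finally have A: "2 / k * I1 \<le> Fn\<^sup>2 / k + Y\<^sup>2" .
  have "- I2 \<le> (p * \<sigma> + q) * sk * Y" using I2 by (simp add: sk_def abs_le_iff)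
  then have "e / sk * (- I2) \<le> e / sk * ((p * \<sigma> + q) * sk * Y)"
    by (rule mult_left_mono) (use e sk in simp)
  also have "\<dots> = e * (p * \<sigma> + q) * Y" using sk by (simp add: field_simps)
  finally have B: "- (e / sqrt k * I2) \<le> e * (p * \<sigma> + q) * Y" by (simp add: sk_def)
  have f2: "2 / k * Fn\<^sup>2 = 2 * (Fn\<^sup>2 / k)" by simp
  show ?thesis
    by (rule fin_up[OF A B quad_aux(2)[OF ec] _ _ _ _ f2]) (use k in simp_all)
qed

lemma eps_cond:
  fixes a b e e0 :: real
  assumes ab: "a < b" and e: "0 < e" "e \<le> e0" and e0: "e0 < 1 / (2 * omega a b)"
  shows "e\<^sup>2 * ((sqrt (3/10*(b-a)\<^sup>2))\<^sup>2 + 1) \<le> 3/4"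
proof -
  define L where "L = b - a"
  have L: "L > 0" using ab by (simp add: L_def)
  define lam where "lam = lambda1 a b"
  have lam: "lam = pi\<^sup>2 / L\<^sup>2" by (simp add: lam_def lambda1_def L_def power_divide)
  have lp: "lam > 0" using L by (simp add: lam)
  define w where "w = omega a b"
  have w2: "w\<^sup>2 = 1 + L\<^sup>2 / pi\<^sup>2"
  proof -
    have "w\<^sup>2 = (1 + lam) / lam" using lp by (simp add: w_def omega_def lam_def[symmetric])
    also have "\<dots> = 1 + L\<^sup>2 / pi\<^sup>2" using lp L by (simp add: lam field_simps)
    finally show ?thesis .
  qed
  have wp: "w > 0" using lp by (simp add: w_def omega_def lam_def[symmetric] add_pos_pos)
  have "e0 * (2 * w) < 1" using e0 wp by (simp add: w_def field_simps)
  moreover have "e * (2 * w) \<le> e0 * (2 * w)" using e wp by (intro mult_right_mono) auto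
  ultimately have "e * (2 * w) < 1" by linarith
  then have "(e * (2 * w))\<^sup>2 < 1\<^sup>2" using e wp by (intro power_strict_mono) auto
  then have ew: "4 * (e\<^sup>2 * w\<^sup>2) \<le> 1" by (simp add: power_mult_distrib)
  have pi2: "pi\<^sup>2 \<le> 10"
  proof -
    have "pi \<le> 3.15" using pi_approx by simp
    then have "pi\<^sup>2 \<le> 3.15\<^sup>2" by (intro power_mono) (use pi_gt_zero in auto)
    also have "(3.15::real)\<^sup>2 \<le> 10" by (simp add: power2_eq_square)
    finally show ?thesis .
  qed
  have s: "(sqrt (3/10*(b-a)\<^sup>2))\<^sup>2 = 3/10 * L\<^sup>2" by (simp add: L_def)
  have "L\<^sup>2 * pi\<^sup>2 \<le> L\<^sup>2 * 10" using pi2 by (intro mult_left_mono) auto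
  then have "3/10 * L\<^sup>2 * pi\<^sup>2 \<le> 3 * L\<^sup>2" by simp
  then have "3/10 * L\<^sup>2 \<le> 3 * (L\<^sup>2 / pi\<^sup>2)" using pi_gt_zero by (simp add: field_simps)
  then have sw: "3/10 * L\<^sup>2 + 1 \<le> 3 * w\<^sup>2" unfolding w2 by simp
  have "e\<^sup>2 * ((sqrt (3/10*(b-a)\<^sup>2))\<^sup>2 + 1) \<le> e\<^sup>2 * (3 * w\<^sup>2)"
    unfolding s by (rule mult_left_mono[OF sw]) simp
  also have "\<dots> = 3/4 * (4 * (e\<^sup>2 * w\<^sup>2))" by simp
  also have "\<dots> \<le> 3/4" using ew by simp
  finally show ?thesis .
qed

theorem lemma8p2:
  fixes a b :: real and f \<mu> :: "real \<Rightarrow> real" and \<delta> c1 c2 c3 \<epsilon>0 :: real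
    and S :: "real \<Rightarrow> (real \<Rightarrow> real) \<times> (real \<Rightarrow> real \<Rightarrow> real)
                    \<Rightarrow> (real \<Rightarrow> real) \<times> (real \<Rightarrow> real \<Rightarrow> real)"
  assumes ab: "a < b"
    and f_L2: "L2fun a b f"
    and mu_nonneg: "\<forall>s>0. \<mu> s \<ge> 0"
    and mu_nonzero: "\<exists>s>0. \<mu> s \<noteq> 0"
    and mu_noninc: "\<forall>s t. 0 < s \<and> s \<le> t \<longrightarrow> \<mu> t \<le> \<mu> s"
    and mu_AC: "\<forall>c d. 0 < c \<and> c \<le> d \<longrightarrow>
                  set_integrable lborel {c..d} (deriv \<mu>)
                  \<and> \<mu> d - \<mu> c = (LINT s:{c..d}|lborel. deriv \<mu> s)"
    and mu_int: "set_integrable lborel {0<..} \<mu>"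
    and kappa_pos: "kappa \<mu> > 0"
    and mu_moment_int: "set_integrable lborel {0<..} (\<lambda>s. s * \<mu> s)"
    and mu_moment: "(LINT s:{0<..}|lborel. s * \<mu> s) = 1"
    and mu_at0: "\<exists>L. (\<mu> \<longlongrightarrow> L) (at_right 0)"
    and delta_pos: "\<delta> > 0"
    and mu_decay: "AE s in lborel. s > 0 \<longrightarrow>
                     \<mu> differentiable (at s) \<and> deriv \<mu> s + \<delta> * \<mu> s \<le> 0"
    and c_pos: "c1 > 0" "c2 > 0" "c3 > 0"
    and eps0: "0 < \<epsilon>0" "\<epsilon>0 < 1 / (2 * omega a b)"
    and S_id: "\<forall>z\<in>Hspace a b \<mu>. S 0 z = z"
    and S_semigroup: "\<forall>z\<in>Hspace a b \<mu>. \<forall>t\<ge>0. \<forall>s\<ge>0. S (t + s) z = S t (S s z)"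
    and S_maps: "\<forall>z\<in>Hspace a b \<mu>. \<forall>t\<ge>0. S t z \<in> Hspace a b \<mu>"
    and diff_ineq: "\<forall>z\<in>Hspace a b \<mu>. \<forall>\<epsilon>. 0 < \<epsilon> \<and> \<epsilon> \<le> \<epsilon>0 \<longrightarrow> (\<forall>t\<ge>0.
         \<exists>L'. ((\<lambda>\<tau>. Lambda a b f \<mu> \<epsilon> (S \<tau> z)) has_real_derivative L') (at t within {0..})
           \<and> L' + \<epsilon> * c1 * Lambda a b f \<mu> \<epsilon> (S t z)
               \<le> c2 * (L2nrm a b (Fprim a f))\<^sup>2 + c3 * \<epsilon>\<^sup>2 * (Lambda a b f \<mu> \<epsilon> (S t z))\<^sup>2)"
    and F_small: "L2nrm a b (Fprim a f) < c1 / (2 * sqrt (c2 * c3))"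
  shows "(\<forall>\<epsilon>. 0 < \<epsilon> \<and> \<epsilon> \<le> \<epsilon>0 \<longrightarrow>
            (\<forall>z\<in>Dset a b f \<mu> c1 c2 c3 \<epsilon>. Hnsq a b \<mu> z \<le> 4 * cstar a b f c1 c2 c3 / \<epsilon>))
         \<and> (\<forall>R. \<exists>\<epsilon>1>0. \<forall>\<B>. \<B> \<subseteq> Hspace a b \<mu> \<and> (\<forall>z\<in>\<B>. Hnsq a b \<mu> z \<le> R) \<longrightarrow>
              (\<forall>\<epsilon>. 0 < \<epsilon> \<and> \<epsilon> \<le> \<epsilon>0 \<and> \<epsilon> \<le> \<epsilon>1 \<longrightarrow> \<B> \<subseteq> Dset a b f \<mu> c1 c2 c3 \<epsilon>))"
proof -
  define Fn where "Fn = L2nrm a b (Fprim a f)"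
  define k where "k = kappa \<mu>"
  define \<sigma> where "\<sigma> = sqrt (3/10*(b-a)\<^sup>2)"
  define cs where "cs = cstar a b f c1 c2 c3"
  have Fn0: "Fn \<ge> 0" by (simp add: Fn_def L2nrm_nonneg)
  have kp: "k > 0" using kappa_pos by (simp add: k_def)
  have csp: "cs > 0"
  proof -
    have qp: "sqrt (c2 * c3) > 0" using c_pos by simp
    have "Fn < c1 / (2 * sqrt (c2 * c3))" using F_small by (simp add: Fn_def)
    also have "\<dots> < c1 / sqrt (c2 * c3)" using qp c_pos by (simp add: field_simps)
    finally have "c1 / sqrt (c2 * c3) - Fn > 0" by simp
    moreover have "sqrt (c2 / c3) > 0" using c_pos by simp
    ultimately show ?thesis by (simp add: cs_def cstar_def Fn_def)
  qed
  have key: "Hnsq a b \<mu> z / 4 \<le> Lambda a b f \<mu> \<epsilon> z \<and> Lambda a b f \<mu> \<epsilon> z \<le> 3 * Hnsq a b \<mu> z + 3 * (Fn\<^sup>2 / k)"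
    if z: "z \<in> Hspace a b \<mu>" and e: "0 < \<epsilon>" "\<epsilon> \<le> \<epsilon>0" for z \<epsilon>
  proof -
    note C = core[OF ab f_L2 mu_nonneg mu_int z]
    define M where "M = Mnsq a b \<mu> (snd z)"
    define Y where "Y = sqrt M"
    have M0: "M \<ge> 0" using C(4) by (simp add: M_def)
    have Y2: "Y\<^sup>2 = M" using M0 by (simp add: Y_def)
    define p where "p = L2nrm a b (fst z)"
    define q where "q = nrm1 a b (fst z)"
    define I1 where "I1 = (LINT s:{0<..}|lborel. \<mu> s * L2ip a b (Fprim a f) (deriv (snd z s)))"
    define I2 where "I2 = (LINT s:{0<..}|lborel. \<mu> s * ip1 a b (fst z) (snd z s))"
    have H: "Hnsq a b \<mu> z = p\<^sup>2 + q\<^sup>2 + Y\<^sup>2" using C(3) by (simp add: p_def q_def Y2 M_def)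
    have L: "Lambda a b f \<mu> \<epsilon> z = p\<^sup>2 + q\<^sup>2 + Y\<^sup>2 + 2 / k * I1 + 2 / k * Fn\<^sup>2 - \<epsilon> / sqrt k * I2"
      unfolding Lambda_def H by (simp add: k_def I1_def I2_def Fn_def)
    have I1b: "\<bar>I1\<bar> \<le> Fn * sqrt k * Y" using C(1) by (simp add: I1_def Fn_def k_def Y_def M_def)
    have I2b: "\<bar>I2\<bar> \<le> (p * \<sigma> + q) * sqrt k * Y" using C(2) by (simp add: I2_def p_def q_def \<sigma>_def k_def Y_def M_def)
    have nn: "p \<ge> 0" "q \<ge> 0" "Y \<ge> 0" "\<sigma> \<ge> 0"
      by (simp_all add: p_def q_def Y_def \<sigma>_def L2nrm_nonneg nrm1_def M0)
    have ec: "\<epsilon>\<^sup>2 * (\<sigma>\<^sup>2 + 1) \<le> 3/4" unfolding \<sigma>_def by (rule eps_cond[OF ab e eps0(2)])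
    have lo: "(p\<^sup>2 + q\<^sup>2 + Y\<^sup>2) / 4 \<le> Lambda a b f \<mu> \<epsilon> z"
      unfolding L by (rule lower_alg[OF kp nn(1,2,3) Fn0 nn(4) e(1) ec I1b I2b])
    have up: "Lambda a b f \<mu> \<epsilon> z \<le> 3 * p\<^sup>2 + 3 * q\<^sup>2 + 3 * Y\<^sup>2 + 3 * (Fn\<^sup>2 / k)"
      unfolding L by (rule upper_alg[OF kp nn(1,2,3) Fn0 nn(4) e(1) ec I1b I2b])
    show ?thesis using lo up unfolding H by simp
  qed
  show ?thesis
  proof (intro conjI allI impI ballI)
    fix \<epsilon> z assume e: "0 < \<epsilon> \<and> \<epsilon> \<le> \<epsilon>0" and z: "z \<in> Dset a b f \<mu> c1 c2 c3 \<epsilon>"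
    have zH: "z \<in> Hspace a b \<mu>" and Lz: "Lambda a b f \<mu> \<epsilon> z \<le> cs / \<epsilon>" using z by (auto simp: Dset_def cs_def)
    have "Hnsq a b \<mu> z / 4 \<le> Lambda a b f \<mu> \<epsilon> z" using key[OF zH, of \<epsilon>] e by auto
    then have "Hnsq a b \<mu> z / 4 \<le> cs / \<epsilon>" using Lz by linarith
    then have "Hnsq a b \<mu> z \<le> 4 * (cs / \<epsilon>)" by linarith
    then show "Hnsq a b \<mu> z \<le> 4 * cstar a b f c1 c2 c3 / \<epsilon>" by (simp add: cs_def)
  next
    fix R :: real
    define K where "K = 3 * \<bar>R\<bar> + 3 * (Fn\<^sup>2 / k) + 1"
    have Kp: "K > 0" using kp by (simp add: K_def add_nonneg_pos)
    show "\<exists>\<epsilon>1>0. \<forall>\<B>. \<B> \<subseteq> Hspace a b \<mu> \<and> (\<forall>z\<in>\<B>. Hnsq a b \<mu> z \<le> R) \<longrightarrow>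
              (\<forall>\<epsilon>. 0 < \<epsilon> \<and> \<epsilon> \<le> \<epsilon>0 \<and> \<epsilon> \<le> \<epsilon>1 \<longrightarrow> \<B> \<subseteq> Dset a b f \<mu> c1 c2 c3 \<epsilon>)"
    proof (intro exI[of _ "cs / K"] conjI allI impI subsetI)
      show "cs / K > 0" using csp Kp by simp
      fix \<B> \<epsilon> z
      assume B: "\<B> \<subseteq> Hspace a b \<mu> \<and> (\<forall>z\<in>\<B>. Hnsq a b \<mu> z \<le> R)"
        and e: "0 < \<epsilon> \<and> \<epsilon> \<le> \<epsilon>0 \<and> \<epsilon> \<le> cs / K" and zB: "z \<in> \<B>"
      have zH: "z \<in> Hspace a b \<mu>" and HR: "Hnsq a b \<mu> z \<le> R" using B zB by auto
      have "Lambda a b f \<mu> \<epsilon> z \<le> 3 * Hnsq a b \<mu> z + 3 * (Fn\<^sup>2 / k)" using key[OF zH] e by auto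
      also have "\<dots> \<le> K" using HR by (simp add: K_def)
      also have "K \<le> cs / \<epsilon>" using e Kp by (simp add: field_simps)
      finally show "z \<in> Dset a b f \<mu> c1 c2 c3 \<epsilon>" using zH by (simp add: Dset_def cs_def)
    qed
  qed
qed

end
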